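(* Let $n\ge1$, let $T=(T_{ii'jj'kk'})\in(\mathbb C^n)^{\otimes6}$ be nonzero and Hermitian when viewed as an operator on $\mathbb C^{n^3}$ (rows indexed by $(i,j,k)$, columns by $(i',j',k')$). Let $\mathcal S=\{P_1,\dots,P_{n^2}\}$ be a basis of $M_n$, orthogonal for the Hilbert–Schmidt inner product, consisting of Hermitian matrices with $P^2=\mathrm{Id}$. For $P,Q,R\in\mathcal S$ put $G_{P,Q,R}=\sum T_{ii'jj'kk'}\overline{P_{ii'}Q_{jj'}R_{kk'}}\in\mathbb R$ and $Z=\sum_{P,Q,R}|G_{P,Q,R}|$, and assume $Z>0$. Let $G$ be the three-player XOR game in which the triple $(P,Q,R)$ is asked with probability $|G_{P,Q,R}|/Z$ and the answers are accepted iff their parity matches the sign of $G_{P,Q,R}$. Then $\beta(G)\le Z^{-1}n^{9/2}\|T\|_{3,\epsilon}$ and $\beta^*(G)\ge Z^{-1}n^3\|T\|_{2,\epsilon}$; in particular $\beta^*(G)\ge n^{-3/2}\frac{\|T\|_{2,\epsilon}}{\|T\|_{3,\epsilon}}\beta(G)$.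
   Context: $\|T\|_{2,\epsilon}$ is the operator norm of $T$ viewed as an operator on $\mathbb C^{n^3}$ (equivalently the injective norm of $T\in\mathbb C^{n^3}\otimes\mathbb C^{n^3}$). $\|T\|_{3,\epsilon}=\sup|\sum T_{ii'jj'kk'}U_{ii'}V_{jj'}W_{kk'}|$ over $U,V,W\in\mathbb C^{n^2}$ of Euclidean norm at most $1$ (the injective norm of $T\in\mathbb C^{n^2}\otimes\mathbb C^{n^2}\otimes\mathbb C^{n^2}$). For a three-player XOR game with question distribution $\pi(x,y,z)$ and target signs $s_{xyz}\in\{\pm1\}$, the classical bias is $\beta(G)=\max_{a_x,b_y,c_z\in\{\pm1\}}|\sum\pi(x,y,z)s_{xyz}a_xb_yc_z|$ and the entangled bias is $\beta^*(G)=\sup|\sum\pi(x,y,z)s_{xyz}\langle\psi|A_x\otimes B_y\otimes C_z|\psi\rangle|$ over all $d$, unit $|\psi\rangle\in(\mathbb C^d)^{\otimes3}$ and Hermitian $A_x,B_y,C_z\in M_d$ squaring to the identity (observables). *)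

theory Defs
  imports "HOL-Analysis.Analysis"
begin

text \<open>Matrices in M_n are functions 'n => 'n => complex, with n = CARD('n).
  The 6-tensor T is indexed T i i' j j' k k'.\<close>

type_synonym 'n mat = "'n \<Rightarrow> 'n \<Rightarrow> complex"
type_synonym 'n tensor6 = "'n \<Rightarrow> 'n \<Rightarrow> 'n \<Rightarrow> 'n \<Rightarrow> 'n \<Rightarrow> 'n \<Rightarrow> complex"

text \<open>T is Hermitian as an operator on C^(n^3), rows (i,j,k), columns (i',j',k').\<close>
definition tensor_hermitian :: "('n::finite) tensor6 \<Rightarrow> bool" where
  "tensor_hermitian T \<longleftrightarrow> (\<forall>i i' j j' k k'. T i i' j j' k k' = cnj (T i' i j' j k' k))"

definition mat_hermitian :: "('n::finite) mat \<Rightarrow> bool" where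
  "mat_hermitian P \<longleftrightarrow> (\<forall>i j. P i j = cnj (P j i))"

definition mat_mult :: "('n::finite) mat \<Rightarrow> 'n mat \<Rightarrow> 'n mat" where
  "mat_mult P Q = (\<lambda>i j. \<Sum>k\<in>UNIV. P i k * Q k j)"

definition mat_id :: "('n::finite) mat" where
  "mat_id = (\<lambda>i j. if i = j then 1 else 0)"

definition hs_inner :: "('n::finite) mat \<Rightarrow> 'n mat \<Rightarrow> complex" where
  "hs_inner P Q = (\<Sum>i\<in>UNIV. \<Sum>j\<in>UNIV. cnj (P i j) * Q i j)"

definition hs_norm2 :: "('n::finite) mat \<Rightarrow> real" where
  "hs_norm2 U = (\<Sum>i\<in>UNIV. \<Sum>j\<in>UNIV. (cmod (U i j))^2)"

definition pauli_like_basis :: "('n::finite) mat set \<Rightarrow> bool" where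
  "pauli_like_basis S \<longleftrightarrow>
     finite S \<and> card S = CARD('n)^2 \<and>
     (\<forall>M::'n mat. \<exists>c. M = (\<lambda>i j. \<Sum>P\<in>S. c P * P i j)) \<and>
     (\<forall>P\<in>S. \<forall>Q\<in>S. P \<noteq> Q \<longrightarrow> hs_inner P Q = 0) \<and>
     (\<forall>P\<in>S. mat_hermitian P \<and> mat_mult P P = mat_id)"

text \<open>Operator norm of T on C^(n^3) (= injective norm in C^(n^3) (x) C^(n^3)).\<close>
definition norm_2eps :: "('n::finite) tensor6 \<Rightarrow> real" where
  "norm_2eps T = Sup {sqrt (\<Sum>i\<in>UNIV. \<Sum>j\<in>UNIV. \<Sum>k\<in>UNIV.
        (cmod (\<Sum>i'\<in>UNIV. \<Sum>j'\<in>UNIV. \<Sum>k'\<in>UNIV. T i i' j j' k k' * u i' j' k'))^2)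
      | u :: 'n \<Rightarrow> 'n \<Rightarrow> 'n \<Rightarrow> complex.
        (\<Sum>i\<in>UNIV. \<Sum>j\<in>UNIV. \<Sum>k\<in>UNIV. (cmod (u i j k))^2) \<le> 1}"

text \<open>Injective norm of T in C^(n^2) (x) C^(n^2) (x) C^(n^2).\<close>
definition norm_3eps :: "('n::finite) tensor6 \<Rightarrow> real" where
  "norm_3eps T = Sup {cmod (\<Sum>i\<in>UNIV. \<Sum>i'\<in>UNIV. \<Sum>j\<in>UNIV. \<Sum>j'\<in>UNIV. \<Sum>k\<in>UNIV. \<Sum>k'\<in>UNIV.
          T i i' j j' k k' * U i i' * V j j' * W k k')
      | U V W. hs_norm2 U \<le> 1 \<and> hs_norm2 V \<le> 1 \<and> hs_norm2 W \<le> 1}"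

definition classical_bias ::
  "'x set \<Rightarrow> 'y set \<Rightarrow> 'z set \<Rightarrow> ('x \<Rightarrow> 'y \<Rightarrow> 'z \<Rightarrow> real) \<Rightarrow> ('x \<Rightarrow> 'y \<Rightarrow> 'z \<Rightarrow> real) \<Rightarrow> real" where
  "classical_bias X Y Z' q s = Sup {\<bar>\<Sum>x\<in>X. \<Sum>y\<in>Y. \<Sum>z\<in>Z'. q x y z * s x y z * a x * b y * c z\<bar>
      | a b c. (\<forall>x\<in>X. a x \<in> {-1, 1}) \<and> (\<forall>y\<in>Y. b y \<in> {-1, 1}) \<and> (\<forall>z\<in>Z'. c z \<in> {-1, 1})}"

text \<open>d x d matrices/vectors are functions on nat restricted to indices < d.\<close>
definition observable :: "nat \<Rightarrow> (nat \<Rightarrow> nat \<Rightarrow> complex) \<Rightarrow> bool" where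
  "observable d A \<longleftrightarrow>
     (\<forall>a<d. \<forall>b<d. A a b = cnj (A b a)) \<and>
     (\<forall>a<d. \<forall>b<d. (\<Sum>e<d. A a e * A e b) = (if a = b then 1 else 0))"

definition unit_state3 :: "nat \<Rightarrow> (nat \<Rightarrow> nat \<Rightarrow> nat \<Rightarrow> complex) \<Rightarrow> bool" where
  "unit_state3 d psi \<longleftrightarrow> (\<Sum>a<d. \<Sum>b<d. \<Sum>c<d. (cmod (psi a b c))^2) = 1"

definition expect3 :: "nat \<Rightarrow> (nat \<Rightarrow> nat \<Rightarrow> nat \<Rightarrow> complex) \<Rightarrow> (nat \<Rightarrow> nat \<Rightarrow> complex)
     \<Rightarrow> (nat \<Rightarrow> nat \<Rightarrow> complex) \<Rightarrow> (nat \<Rightarrow> nat \<Rightarrow> complex) \<Rightarrow> complex" where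
  "expect3 d psi A B C = (\<Sum>a<d. \<Sum>b<d. \<Sum>c<d. \<Sum>a'<d. \<Sum>b'<d. \<Sum>c'<d.
      cnj (psi a b c) * A a a' * B b b' * C c c' * psi a' b' c')"

definition entangled_bias ::
  "'x set \<Rightarrow> 'y set \<Rightarrow> 'z set \<Rightarrow> ('x \<Rightarrow> 'y \<Rightarrow> 'z \<Rightarrow> real) \<Rightarrow> ('x \<Rightarrow> 'y \<Rightarrow> 'z \<Rightarrow> real) \<Rightarrow> real" where
  "entangled_bias X Y Z' q s = Sup {cmod (\<Sum>x\<in>X. \<Sum>y\<in>Y. \<Sum>z\<in>Z'.
          complex_of_real (q x y z * s x y z) * expect3 d psi (A x) (B y) (C z))
      | d psi A B C. unit_state3 d psi \<and> (\<forall>x\<in>X. observable d (A x))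
          \<and> (\<forall>y\<in>Y. observable d (B y)) \<and> (\<forall>z\<in>Z'. observable d (C z))}"

text \<open>The coefficients G_{P,Q,R} (real by hermiticity; we take the real part).\<close>
definition coeffG :: "('n::finite) tensor6 \<Rightarrow> 'n mat \<Rightarrow> 'n mat \<Rightarrow> 'n mat \<Rightarrow> real" where
  "coeffG T P Q R = Re (\<Sum>i\<in>UNIV. \<Sum>i'\<in>UNIV. \<Sum>j\<in>UNIV. \<Sum>j'\<in>UNIV. \<Sum>k\<in>UNIV. \<Sum>k'\<in>UNIV.
      T i i' j j' k k' * cnj (P i i' * Q j j' * R k k'))"

definition normZ :: "('n::finite) tensor6 \<Rightarrow> 'n mat set \<Rightarrow> real" where
  "normZ T S = (\<Sum>P\<in>S. \<Sum>Q\<in>S. \<Sum>R\<in>S. \<bar>coeffG T P Q R\<bar>)"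

definition game_pi :: "('n::finite) tensor6 \<Rightarrow> 'n mat set \<Rightarrow> 'n mat \<Rightarrow> 'n mat \<Rightarrow> 'n mat \<Rightarrow> real" where
  "game_pi T S P Q R = \<bar>coeffG T P Q R\<bar> / normZ T S"

text \<open>Sign of G (the value at G = 0 is irrelevant since then pi = 0; we use +1).\<close>
definition game_sign :: "('n::finite) tensor6 \<Rightarrow> 'n mat \<Rightarrow> 'n mat \<Rightarrow> 'n mat \<Rightarrow> real" where
  "game_sign T P Q R = (if coeffG T P Q R < 0 then -1 else 1)"

end

theory Submission
  imports Defs
begin


lemma if_conj0: "(if A \<and> B then x else 0) = (if A then (if B then x else 0) else (0::'a::zero))"
  by simp

lemma sum2_delta:
  fixes f :: "'a::finite \<Rightarrow> 'b::finite \<Rightarrow> 'c::comm_monoid_add"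
  shows "(\<Sum>i\<in>UNIV. \<Sum>j\<in>UNIV. if i = c \<and> j = d then f i j else 0) = f c d"
proof -
  have "\<And>i. (\<Sum>j\<in>UNIV. if i = c \<and> j = d then f i j else 0) = (if i = c then f i d else 0)"
    by (simp add: if_conj0)
  thus ?thesis by simp
qed

lemma hs_inner_self:
  fixes P :: "('n::finite) mat"
  assumes "mat_hermitian P" "mat_mult P P = mat_id"
  shows "hs_inner P P = of_nat CARD('n)"
proof -
  have "hs_inner P P = (\<Sum>i\<in>UNIV. \<Sum>j\<in>UNIV. P j i * P i j)"
    unfolding hs_inner_def using assms(1) unfolding mat_hermitian_def
    by (metis (no_types, lifting) sum.cong)
  also have "\<dots> = (\<Sum>j\<in>UNIV. \<Sum>i\<in>UNIV. P j i * P i j)" by (rule sum.swap)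
  also have "\<dots> = (\<Sum>j\<in>UNIV. mat_mult P P j j)" unfolding mat_mult_def by simp
  also have "\<dots> = of_nat CARD('n)" using assms(2) by (simp add: mat_id_def)
  finally show ?thesis .
qed

lemma completeness:
  fixes S :: "('n::finite) mat set"
  assumes "pauli_like_basis S"
  shows "(\<Sum>P\<in>S. cnj (P c d) * P a b) = (if a = c \<and> b = d then of_nat CARD('n) else 0)"
proof -
  have fin: "finite S" using assms by (simp add: pauli_like_basis_def)
  define E :: "'n mat" where "E = (\<lambda>i j. if i = c \<and> j = d then 1 else 0)"
  obtain w where w: "E = (\<lambda>i j. \<Sum>P\<in>S. w P * P i j)"
    using assms unfolding pauli_like_basis_def by blast
  have npos: "(of_nat CARD('n) :: complex) \<noteq> 0" by simp
  have coef: "w Q = cnj (Q c d) / of_nat CARD('n)" if Q: "Q \<in> S" for Q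
  proof -
    have "hs_inner Q E = (\<Sum>i\<in>UNIV. \<Sum>j\<in>UNIV. if i = c \<and> j = d then cnj (Q i j) else 0)"
      unfolding hs_inner_def E_def by (intro sum.cong) auto
    also have "\<dots> = cnj (Q c d)" by (rule sum2_delta)
    finally have "hs_inner Q E = cnj (Q c d)" .
    moreover have "hs_inner Q E = (\<Sum>P\<in>S. w P * hs_inner Q P)"
      unfolding w hs_inner_def
      by (simp add: sum_distrib_left sum.swap[where A=S] mult_ac)
    moreover have "(\<Sum>P\<in>S. w P * hs_inner Q P) = (\<Sum>P\<in>S. if P = Q then w Q * of_nat CARD('n) else 0)"
    proof (intro sum.cong refl)
      fix P assume P: "P \<in> S"
      have QQ: "hs_inner Q Q = of_nat CARD('n)"
        using assms Q by (intro hs_inner_self) (auto simp: pauli_like_basis_def)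
      show "w P * hs_inner Q P = (if P = Q then w Q * of_nat CARD('n) else 0)"
        using assms P Q QQ unfolding pauli_like_basis_def by auto
    qed
    ultimately have "cnj (Q c d) = w Q * of_nat CARD('n)" using fin Q by simp
    then show ?thesis using npos by (simp add: field_simps)
  qed
  have "E a b = (\<Sum>P\<in>S. cnj (P c d) / of_nat CARD('n) * P a b)"
    using w coef by (metis (no_types, lifting) sum.cong)
  hence "E a b * of_nat CARD('n) = (\<Sum>P\<in>S. cnj (P c d) * P a b)"
    using npos by (simp add: sum_divide_distrib[symmetric])
  thus ?thesis by (cases "a = c \<and> b = d") (auto simp: E_def)
qed



definition gC :: "('n::finite) tensor6 \<Rightarrow> 'n mat \<Rightarrow> 'n mat \<Rightarrow> 'n mat \<Rightarrow> complex" where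
  "gC T P Q R = (\<Sum>i\<in>UNIV. \<Sum>i'\<in>UNIV. \<Sum>j\<in>UNIV. \<Sum>j'\<in>UNIV. \<Sum>k\<in>UNIV. \<Sum>k'\<in>UNIV.
      T i i' j j' k k' * cnj (P i i' * Q j j' * R k k'))"

definition F6 :: "('n::finite) tensor6 \<Rightarrow> 'n mat \<Rightarrow> 'n mat \<Rightarrow> 'n mat \<Rightarrow> complex" where
  "F6 T U V W = (\<Sum>i\<in>UNIV. \<Sum>i'\<in>UNIV. \<Sum>j\<in>UNIV. \<Sum>j'\<in>UNIV. \<Sum>k\<in>UNIV. \<Sum>k'\<in>UNIV.
      T i i' j j' k k' * U i i' * V j j' * W k k')"

definition cm :: "('n::finite) mat \<Rightarrow> 'n mat" where "cm P = (\<lambda>i j. cnj (P i j))"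

lemma gC_F6: "gC T P Q R = F6 T (cm P) (cm Q) (cm R)"
  unfolding gC_def F6_def cm_def by (simp add: mult_ac)

lemma swap6:
  "(\<Sum>i\<in>UNIV. \<Sum>i'\<in>UNIV. \<Sum>j\<in>UNIV. \<Sum>j'\<in>UNIV. \<Sum>k\<in>UNIV. \<Sum>k'\<in>UNIV. g i i' j j' k k')
 = (\<Sum>i\<in>UNIV. \<Sum>i'\<in>UNIV. \<Sum>j\<in>UNIV. \<Sum>j'\<in>UNIV. \<Sum>k\<in>UNIV. \<Sum>k'\<in>UNIV. (g i' i j' j k' k :: 'c::comm_monoid_add))"
  apply (rule trans[OF sum.swap])
  apply (intro sum.cong refl)
  apply (rule trans[OF sum.swap])
  apply (intro sum.cong refl)
  apply (rule trans[OF sum.swap])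
  apply (intro sum.cong refl)
  done

lemma gC_real:
  assumes "tensor_hermitian T" "mat_hermitian P" "mat_hermitian Q" "mat_hermitian R"
  shows "cnj (gC T P Q R) = gC T P Q R"
proof -
  have "cnj (gC T P Q R) = (\<Sum>i\<in>UNIV. \<Sum>i'\<in>UNIV. \<Sum>j\<in>UNIV. \<Sum>j'\<in>UNIV. \<Sum>k\<in>UNIV. \<Sum>k'\<in>UNIV.
      T i' i j' j k' k * cnj (P i' i * Q j' j * R k' k))"
    unfolding gC_def cnj_sum complex_cnj_mult using assms unfolding tensor_hermitian_def mat_hermitian_def
    by (intro sum.cong refl) (metis complex_cnj_cnj)
  also have "\<dots> = gC T P Q R" unfolding gC_def by (rule swap6[symmetric])
  finally show ?thesis .
qed

lemma pull6:
  "(\<Sum>P\<in>A. \<Sum>i\<in>I1. \<Sum>i'\<in>I2. \<Sum>j\<in>I3. \<Sum>j'\<in>I4. \<Sum>k\<in>I5. \<Sum>k'\<in>I6. f P i i' j j' k k')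
 = (\<Sum>i\<in>I1. \<Sum>i'\<in>I2. \<Sum>j\<in>I3. \<Sum>j'\<in>I4. \<Sum>k\<in>I5. \<Sum>k'\<in>I6. \<Sum>P\<in>A. (f P i i' j j' k k' :: 'c::comm_monoid_add))"
  apply (rule trans[OF sum.swap], rule sum.cong[OF refl])
  apply (rule trans[OF sum.swap], rule sum.cong[OF refl])
  apply (rule trans[OF sum.swap], rule sum.cong[OF refl])
  apply (rule trans[OF sum.swap], rule sum.cong[OF refl])
  apply (rule trans[OF sum.swap], rule sum.cong[OF refl])
  apply (rule trans[OF sum.swap], rule sum.cong[OF refl])
  apply (rule refl)
  done

lemma lin1: "(\<Sum>P\<in>A. w P * F6 T (X P) V W) = F6 T (\<lambda>i i'. \<Sum>P\<in>A. w P * X P i i') V W"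
proof -
  have "(\<Sum>P\<in>A. w P * F6 T (X P) V W) = (\<Sum>P\<in>A. \<Sum>i\<in>UNIV. \<Sum>i'\<in>UNIV. \<Sum>j\<in>UNIV. \<Sum>j'\<in>UNIV. \<Sum>k\<in>UNIV. \<Sum>k'\<in>UNIV.
      T i i' j j' k k' * (w P * X P i i') * V j j' * W k k')"
    unfolding F6_def by (simp add: sum_distrib_left mult_ac)
  also have "\<dots> = F6 T (\<lambda>i i'. \<Sum>P\<in>A. w P * X P i i') V W"
    unfolding F6_def by (subst pull6) (simp add: sum_distrib_left sum_distrib_right)
  finally show ?thesis .
qed

lemma lin2: "(\<Sum>P\<in>A. w P * F6 T U (X P) W) = F6 T U (\<lambda>i i'. \<Sum>P\<in>A. w P * X P i i') W"
proof -
  have "(\<Sum>P\<in>A. w P * F6 T U (X P) W) = (\<Sum>P\<in>A. \<Sum>i\<in>UNIV. \<Sum>i'\<in>UNIV. \<Sum>j\<in>UNIV. \<Sum>j'\<in>UNIV. \<Sum>k\<in>UNIV. \<Sum>k'\<in>UNIV.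
      T i i' j j' k k' * U i i' * (w P * X P j j') * W k k')"
    unfolding F6_def by (simp add: sum_distrib_left mult_ac)
  also have "\<dots> = F6 T U (\<lambda>i i'. \<Sum>P\<in>A. w P * X P i i') W"
    unfolding F6_def by (subst pull6) (simp add: sum_distrib_left sum_distrib_right)
  finally show ?thesis .
qed

lemma lin3: "(\<Sum>P\<in>A. w P * F6 T U V (X P)) = F6 T U V (\<lambda>i i'. \<Sum>P\<in>A. w P * X P i i')"
proof -
  have "(\<Sum>P\<in>A. w P * F6 T U V (X P)) = (\<Sum>P\<in>A. \<Sum>i\<in>UNIV. \<Sum>i'\<in>UNIV. \<Sum>j\<in>UNIV. \<Sum>j'\<in>UNIV. \<Sum>k\<in>UNIV. \<Sum>k'\<in>UNIV.
      T i i' j j' k k' * U i i' * V j j' * (w P * X P k k'))"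
    unfolding F6_def by (simp add: sum_distrib_left mult_ac)
  also have "\<dots> = F6 T U V (\<lambda>i i'. \<Sum>P\<in>A. w P * X P i i')"
    unfolding F6_def by (subst pull6) (simp add: sum_distrib_left)
  finally show ?thesis .
qed

definition Dl :: "'n::finite \<Rightarrow> 'n \<Rightarrow> 'n mat" where
  "Dl x y = (\<lambda>i i'. if i = x \<and> i' = y then of_nat CARD('n) else 0)"

lemma Dl_sum: "(\<Sum>i\<in>UNIV. \<Sum>i'\<in>UNIV. Dl x y i i' * f i i') = of_nat CARD('n) * (f x y :: complex)"
  for x y :: "'n::finite"
proof -
  have "(\<Sum>i\<in>UNIV. \<Sum>i'\<in>UNIV. Dl x y i i' * f i i') = (\<Sum>i\<in>UNIV. \<Sum>i'\<in>UNIV. if i = x \<and> i' = y then of_nat CARD('n) * f i i' else 0)"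
    unfolding Dl_def by (intro sum.cong refl) auto
  also have "\<dots> = of_nat CARD('n) * f x y" by (rule sum2_delta)
  finally show ?thesis .
qed

lemma F6_delta: fixes T :: "('n::finite) tensor6" shows "F6 T (Dl a a') (Dl b b') (Dl c c') = of_nat CARD('n)^3 * T a a' b b' c c'"
proof -
  have "F6 T (Dl a a') (Dl b b') (Dl c c') = (\<Sum>i\<in>UNIV. \<Sum>i'\<in>UNIV. Dl a a' i i' *
      (\<Sum>j\<in>UNIV. \<Sum>j'\<in>UNIV. Dl b b' j j' * (\<Sum>k\<in>UNIV. \<Sum>k'\<in>UNIV. Dl c c' k k' * T i i' j j' k k')))"
    unfolding F6_def by (simp add: sum_distrib_left mult_ac)
  also have "\<dots> = of_nat CARD('n)^3 * T a a' b b' c c'" by (simp only: Dl_sum) (simp add: power3_eq_cube)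
  finally show ?thesis .
qed

lemma expansion:
  fixes T :: "('n::finite) tensor6" and S :: "'n mat set"
  assumes "pauli_like_basis S"
  shows "(\<Sum>P\<in>S. \<Sum>Q\<in>S. \<Sum>R\<in>S. gC T P Q R * (P a a' * Q b b' * R c c'))
     = of_nat CARD('n)^3 * T a a' b b' c c'"
proof -
  have cD: "(\<lambda>i i'. \<Sum>P\<in>S. P x y * cm P i i') = Dl x y" for x y
    unfolding cm_def Dl_def using completeness[OF assms] by (auto simp: mult.commute fun_eq_iff)
  have "(\<Sum>P\<in>S. \<Sum>Q\<in>S. \<Sum>R\<in>S. gC T P Q R * (P a a' * Q b b' * R c c'))
    = (\<Sum>P\<in>S. \<Sum>Q\<in>S. P a a' * Q b b' * (\<Sum>R\<in>S. R c c' * F6 T (cm P) (cm Q) (cm R)))"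
    by (simp add: gC_F6 sum_distrib_left mult_ac)
  also have "\<dots> = (\<Sum>P\<in>S. P a a' * (\<Sum>Q\<in>S. Q b b' * F6 T (cm P) (cm Q) (Dl c c')))"
    by (simp add: lin3 cD sum_distrib_left mult_ac)
  also have "\<dots> = (\<Sum>P\<in>S. P a a' * F6 T (cm P) (Dl b b') (Dl c c'))"
    by (simp add: lin2 cD)
  also have "\<dots> = F6 T (Dl a a') (Dl b b') (Dl c c')"
    by (simp add: lin1 cD)
  finally show ?thesis by (simp add: F6_delta)
qed



lemma pull2:
  "(\<Sum>P\<in>A. \<Sum>i\<in>I. \<Sum>j\<in>J. f P i j) = (\<Sum>i\<in>I. \<Sum>j\<in>J. \<Sum>P\<in>A. (f P i j :: 'c::comm_monoid_add))"
  apply (rule trans[OF sum.swap], rule sum.cong[OF refl])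
  apply (rule trans[OF sum.swap], rule sum.cong[OF refl])
  apply (rule refl)
  done

lemma norm3_alt: "norm_3eps T = Sup {cmod (F6 T U V W) | U V W. hs_norm2 U \<le> 1 \<and> hs_norm2 V \<le> 1 \<and> hs_norm2 W \<le> 1}"
  unfolding norm_3eps_def F6_def by (simp add: mult.assoc)

lemma entry_le: "hs_norm2 U \<le> 1 \<Longrightarrow> cmod (U i j) \<le> 1"
proof -
  assume a: "hs_norm2 U \<le> 1"
  have "(cmod (U i j))^2 \<le> (\<Sum>j'\<in>UNIV. (cmod (U i j'))^2)"
    by (rule member_le_sum) auto
  also have "\<dots> \<le> hs_norm2 U" unfolding hs_norm2_def
    by (rule member_le_sum[where f="\<lambda>i. \<Sum>j'\<in>UNIV. (cmod (U i j'))^2"]) (auto intro: sum_nonneg)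
  finally have "(cmod (U i j))^2 \<le> 1" using a by simp
  thus ?thesis by (simp add: power_le_one_iff abs_le_square_iff)
qed

lemma bdd3: "bdd_above {cmod (F6 T U V W) | U V W. hs_norm2 U \<le> 1 \<and> hs_norm2 V \<le> 1 \<and> hs_norm2 W \<le> 1}"
proof (rule bdd_aboveI[where M="\<Sum>i\<in>UNIV. \<Sum>i'\<in>UNIV. \<Sum>j\<in>UNIV. \<Sum>j'\<in>UNIV. \<Sum>k\<in>UNIV. \<Sum>k'\<in>UNIV. cmod (T i i' j j' k k')"])
  fix x assume "x \<in> {cmod (F6 T U V W) | U V W. hs_norm2 U \<le> 1 \<and> hs_norm2 V \<le> 1 \<and> hs_norm2 W \<le> 1}"
  then obtain U V W where x: "x = cmod (F6 T U V W)" and h: "hs_norm2 U \<le> 1" "hs_norm2 V \<le> 1" "hs_norm2 W \<le> 1"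
    by blast
  have e: "cmod (T i i' j j' k k' * U i i' * V j j' * W k k') \<le> cmod (T i i' j j' k k')" for i i' j j' k k'
  proof -
    have "cmod (U i i') * cmod (V j j') * cmod (W k k') \<le> 1 * 1 * 1"
      using entry_le[OF h(1)] entry_le[OF h(2)] entry_le[OF h(3)]
      by (intro mult_mono) auto
    hence "cmod (T i i' j j' k k') * (cmod (U i i') * cmod (V j j') * cmod (W k k')) \<le> cmod (T i i' j j' k k') * 1"
      by (intro mult_left_mono) auto
    thus ?thesis by (simp add: norm_mult mult_ac)
  qed
  show "x \<le> (\<Sum>i\<in>UNIV. \<Sum>i'\<in>UNIV. \<Sum>j\<in>UNIV. \<Sum>j'\<in>UNIV. \<Sum>k\<in>UNIV. \<Sum>k'\<in>UNIV. cmod (T i i' j j' k k'))"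
    unfolding x F6_def by (intro sum_norm_le e)
qed

lemma F6_scale: "F6 T (\<lambda>i j. s * U i j) (\<lambda>i j. s * V i j) (\<lambda>i j. s * W i j) = s^3 * F6 T U V W"
  unfolding F6_def by (simp add: sum_distrib_left power3_eq_cube mult_ac)

lemma hs_norm2_scale: "hs_norm2 (\<lambda>i j. of_real r * U i j) = r^2 * hs_norm2 U"
  unfolding hs_norm2_def by (simp add: sum_distrib_left norm_mult power_mult_distrib)

lemma hs_norm2_signsum:
  fixes S :: "('n::finite) mat set" and a :: "'n mat \<Rightarrow> real"
  assumes "pauli_like_basis S" and a: "\<forall>x\<in>S. a x \<in> {-1, 1}"
  shows "hs_norm2 (\<lambda>i j. \<Sum>P\<in>S. complex_of_real (a P) * cm P i j) = real CARD('n) ^ 3"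
proof -
  define U where "U = (\<lambda>i j. \<Sum>P\<in>S. complex_of_real (a P) * cm P i j)"
  have fin: "finite S" and cS: "card S = CARD('n)^2" using assms by (auto simp: pauli_like_basis_def)
  have "complex_of_real (hs_norm2 U) = (\<Sum>i\<in>UNIV. \<Sum>j\<in>UNIV. cnj (U i j) * U i j)"
    unfolding hs_norm2_def of_real_sum complex_norm_square by (simp add: mult.commute)
  also have "\<dots> = (\<Sum>i\<in>UNIV. \<Sum>j\<in>UNIV. \<Sum>P\<in>S. \<Sum>Q\<in>S. complex_of_real (a P * a Q) * (cnj (P i j) * Q i j))"
    unfolding U_def cm_def by (simp add: cnj_sum sum_distrib_left sum_distrib_right mult_ac)
  also have "\<dots> = (\<Sum>P\<in>S. \<Sum>Q\<in>S. \<Sum>i\<in>UNIV. \<Sum>j\<in>UNIV. complex_of_real (a P * a Q) * (cnj (P i j) * Q i j))"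
    by (subst pull2[symmetric], rule sum.cong[OF refl], subst pull2[symmetric], rule refl)
  also have "\<dots> = (\<Sum>P\<in>S. \<Sum>Q\<in>S. complex_of_real (a P * a Q) * hs_inner P Q)"
    unfolding hs_inner_def by (simp add: sum_distrib_left)
  also have "\<dots> = (\<Sum>P\<in>S. of_nat CARD('n))"
  proof (rule sum.cong[OF refl])
    fix P assume P: "P \<in> S"
    have "(\<Sum>Q\<in>S. complex_of_real (a P * a Q) * hs_inner P Q) = (\<Sum>Q\<in>S. if Q = P then of_nat CARD('n) else 0)"
    proof (rule sum.cong[OF refl])
      fix Q assume Q: "Q \<in> S"
      have PP: "hs_inner P P = of_nat CARD('n)"
        using assms P by (intro hs_inner_self) (auto simp: pauli_like_basis_def)
      have "a P * a P = 1" using a P by auto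
      then show "complex_of_real (a P * a Q) * hs_inner P Q = (if Q = P then of_nat CARD('n) else 0)"
        using assms P Q PP unfolding pauli_like_basis_def by auto
    qed
    also have "\<dots> = of_nat CARD('n)" using fin P by simp
    finally show "(\<Sum>Q\<in>S. complex_of_real (a P * a Q) * hs_inner P Q) = of_nat CARD('n)" .
  qed
  also have "\<dots> = complex_of_real (real CARD('n) ^ 3)" using cS by (simp add: power3_eq_cube power2_eq_square)
  finally show ?thesis unfolding U_def using of_real_eq_iff by blast
qed



lemma pow92: "x > 0 \<Longrightarrow> x powr (9/2) = (sqrt x)^9"
proof -
  assume x: "x > 0"
  have "x powr (9/2) = (x powr (1/2)) powr 9" by (simp add: powr_powr)
  also have "\<dots> = (sqrt x) ^ 9" using x by (simp add: powr_half_sqrt powr_realpow[of _ 9, simplified])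
  finally show ?thesis .
qed

lemma pisign: "game_pi T S P Q R * game_sign T P Q R = coeffG T P Q R / normZ T S"
  unfolding game_pi_def game_sign_def by (auto simp: abs_if)

lemma coeffG_gC: "coeffG T P Q R = Re (gC T P Q R)"
  unfolding coeffG_def gC_def by simp

lemma sum_lin_F6:
  fixes T :: "('n::finite) tensor6" and S :: "'n mat set"
  shows "(\<Sum>P\<in>S. \<Sum>Q\<in>S. \<Sum>R\<in>S. gC T P Q R * (wa P * wb Q * wc R))
     = F6 T (\<lambda>i j. \<Sum>P\<in>S. wa P * cm P i j) (\<lambda>i j. \<Sum>P\<in>S. wb P * cm P i j) (\<lambda>i j. \<Sum>P\<in>S. wc P * cm P i j)"
proof -
  have "(\<Sum>P\<in>S. \<Sum>Q\<in>S. \<Sum>R\<in>S. gC T P Q R * (wa P * wb Q * wc R))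
    = (\<Sum>P\<in>S. \<Sum>Q\<in>S. wa P * wb Q * (\<Sum>R\<in>S. wc R * F6 T (cm P) (cm Q) (cm R)))"
    by (simp add: gC_F6 sum_distrib_left mult_ac)
  also have "\<dots> = (\<Sum>P\<in>S. wa P * (\<Sum>Q\<in>S. wb Q * F6 T (cm P) (cm Q) (\<lambda>i j. \<Sum>P\<in>S. wc P * cm P i j)))"
    by (simp add: lin3 sum_distrib_left mult_ac)
  also have "\<dots> = (\<Sum>P\<in>S. wa P * F6 T (cm P) (\<lambda>i j. \<Sum>P\<in>S. wb P * cm P i j) (\<lambda>i j. \<Sum>P\<in>S. wc P * cm P i j))"
    by (simp add: lin2)
  also have "\<dots> = F6 T (\<lambda>i j. \<Sum>P\<in>S. wa P * cm P i j) (\<lambda>i j. \<Sum>P\<in>S. wb P * cm P i j) (\<lambda>i j. \<Sum>P\<in>S. wc P * cm P i j)"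
    by (simp add: lin1)
  finally show ?thesis .
qed

lemma classical_part:
  fixes T :: "('n::finite) tensor6" and S :: "'n mat set"
  assumes B: "pauli_like_basis S" and Zp: "normZ T S > 0"
  shows "classical_bias S S S (game_pi T S) (game_sign T) \<le> real CARD('n) powr (9/2) * norm_3eps T / normZ T S"
  unfolding classical_bias_def
proof (rule cSup_least)
  show "{\<bar>\<Sum>x\<in>S. \<Sum>y\<in>S. \<Sum>z\<in>S. game_pi T S x y z * game_sign T x y z * a x * b y * c z\<bar> |a b c.
        (\<forall>x\<in>S. a x \<in> {- 1, 1}) \<and> (\<forall>y\<in>S. b y \<in> {- 1, 1}) \<and> (\<forall>z\<in>S. c z \<in> {- 1, 1})} \<noteq> {}"
    by (rule ex_in_conv[THEN iffD1], rule exI[where x="\<bar>\<Sum>x\<in>S. \<Sum>y\<in>S. \<Sum>z\<in>S. game_pi T S x y z * game_sign T x y z * 1 * 1 * 1\<bar>"])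
       (rule CollectI, intro exI[where x="\<lambda>_. 1"], auto)
next
  let ?N = "real CARD('n)"
  let ?Z = "normZ T S"
  fix x assume "x \<in> {\<bar>\<Sum>x\<in>S. \<Sum>y\<in>S. \<Sum>z\<in>S. game_pi T S x y z * game_sign T x y z * a x * b y * c z\<bar> |a b c.
        (\<forall>x\<in>S. a x \<in> {- 1, 1}) \<and> (\<forall>y\<in>S. b y \<in> {- 1, 1}) \<and> (\<forall>z\<in>S. c z \<in> {- 1, 1})}"
  then obtain a b c where x: "x = \<bar>\<Sum>x\<in>S. \<Sum>y\<in>S. \<Sum>z\<in>S. game_pi T S x y z * game_sign T x y z * a x * b y * c z\<bar>"
    and a: "\<forall>x\<in>S. a x \<in> {- 1, 1}" and b: "\<forall>y\<in>S. b y \<in> {- 1, 1}" and c: "\<forall>z\<in>S. c z \<in> {- 1, 1}"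
    by blast
  define U where "U = (\<lambda>i j. \<Sum>P\<in>S. complex_of_real (a P) * cm P i j)"
  define V where "V = (\<lambda>i j. \<Sum>P\<in>S. complex_of_real (b P) * cm P i j)"
  define W where "W = (\<lambda>i j. \<Sum>P\<in>S. complex_of_real (c P) * cm P i j)"
  have Npos: "?N > 0" by simp
  define r where "r = sqrt ?N"
  have rpos: "r > 0" using Npos by (simp add: r_def)
  have r2: "r^2 = ?N" using Npos by (simp add: r_def)
  define s where "s = 1 / r^3"
  have s0: "s > 0" unfolding s_def using rpos by simp
  let ?U' = "\<lambda>i j. complex_of_real s * U i j"
  let ?V' = "\<lambda>i j. complex_of_real s * V i j"
  let ?W' = "\<lambda>i j. complex_of_real s * W i j"
  have s2: "s^2 * ?N^3 = 1" unfolding s_def using rpos r2[symmetric]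
    by (simp add: power_divide field_simps)
  have hU: "hs_norm2 ?U' \<le> 1" unfolding hs_norm2_scale U_def using hs_norm2_signsum[OF B a] s2 by simp
  have hV: "hs_norm2 ?V' \<le> 1" unfolding hs_norm2_scale V_def using hs_norm2_signsum[OF B b] s2 by simp
  have hW: "hs_norm2 ?W' \<le> 1" unfolding hs_norm2_scale W_def using hs_norm2_signsum[OF B c] s2 by simp
  have le3: "cmod (F6 T ?U' ?V' ?W') \<le> norm_3eps T"
    unfolding norm3_alt by (rule cSup_upper[OF _ bdd3]) (use hU hV hW in blast)
  have "F6 T ?U' ?V' ?W' = (complex_of_real s)^3 * F6 T U V W" by (rule F6_scale)
  hence "cmod (F6 T ?U' ?V' ?W') = s^3 * cmod (F6 T U V W)" using s0 by (simp add: norm_mult norm_power)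
  moreover have s39: "s^3 * r^9 = 1" unfolding s_def using rpos
    by (simp add: power_divide power_mult[symmetric])
  ultimately have F6le: "cmod (F6 T U V W) \<le> r^9 * norm_3eps T"
  proof -
    assume e: "cmod (F6 T ?U' ?V' ?W') = s^3 * cmod (F6 T U V W)"
    have "cmod (F6 T U V W) = r^9 * (s^3 * cmod (F6 T U V W))" using s39 by (simp add: algebra_simps)
    also have "\<dots> \<le> r^9 * norm_3eps T" using le3 e rpos by (intro mult_left_mono) auto
    finally show ?thesis .
  qed
  have "(\<Sum>x\<in>S. \<Sum>y\<in>S. \<Sum>z\<in>S. game_pi T S x y z * game_sign T x y z * a x * b y * c z)
      = Re (\<Sum>P\<in>S. \<Sum>Q\<in>S. \<Sum>R\<in>S. gC T P Q R * (complex_of_real (a P) * complex_of_real (b Q) * complex_of_real (c R))) / ?Z"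
    apply (simp only: Re_sum sum_divide_distrib)
    apply (intro sum.cong refl)
    apply (simp only: pisign coeffG_gC)
    apply simp
    done
  also have "\<dots> = Re (F6 T U V W) / ?Z" unfolding U_def V_def W_def sum_lin_F6 by simp
  finally have "x = \<bar>Re (F6 T U V W)\<bar> / ?Z" using x Zp by simp
  also have "\<dots> \<le> cmod (F6 T U V W) / ?Z" using Zp by (intro divide_right_mono abs_Re_le_cmod) auto
  also have "\<dots> \<le> r^9 * norm_3eps T / ?Z" using Zp F6le by (intro divide_right_mono) auto
  also have "r^9 = ?N powr (9/2)" unfolding r_def using Npos by (simp add: pow92)
  finally show "x \<le> ?N powr (9/2) * norm_3eps T / ?Z" .
qed



lemma unitary1:
  assumes A: "observable d A"
  shows "(\<Sum>a<d. (cmod (\<Sum>a'<d. A a a' * v a'))^2) = (\<Sum>a<d. (cmod (v a))^2)"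
proof -
  have herm: "\<And>a b. a < d \<Longrightarrow> b < d \<Longrightarrow> cnj (A a b) = A b a"
    using A unfolding observable_def by (metis complex_cnj_cnj)
  have sq: "\<And>a b. a < d \<Longrightarrow> b < d \<Longrightarrow> (\<Sum>e<d. A a e * A e b) = (if a = b then 1 else 0)"
    using A unfolding observable_def by blast
  have "complex_of_real (\<Sum>a<d. (cmod (\<Sum>a'<d. A a a' * v a'))^2)
      = (\<Sum>a<d. cnj (\<Sum>a'<d. A a a' * v a') * (\<Sum>a''<d. A a a'' * v a''))"
    unfolding of_real_sum complex_norm_square by (simp add: mult.commute)
  also have "\<dots> = (\<Sum>a<d. \<Sum>a'<d. \<Sum>a''<d. cnj (v a') * v a'' * (A a' a * A a a''))"
    by (intro sum.cong refl) (simp add: cnj_sum sum_distrib_left sum_distrib_right herm mult_ac)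
  also have "\<dots> = (\<Sum>a'<d. \<Sum>a''<d. cnj (v a') * v a'' * (\<Sum>a<d. A a' a * A a a''))"
    by (subst pull2) (simp add: sum_distrib_left)
  also have "\<dots> = (\<Sum>a'<d. \<Sum>a''<d. if a'' = a' then cnj (v a') * v a' else 0)"
    by (intro sum.cong refl) (auto simp: sq)
  also have "\<dots> = (\<Sum>a'<d. cnj (v a') * v a')" by simp
  also have "\<dots> = complex_of_real (\<Sum>a<d. (cmod (v a))^2)"
    unfolding of_real_sum complex_norm_square by (simp add: mult.commute)
  finally show ?thesis using of_real_eq_iff by blast
qed

lemma expect3_le:
  assumes U: "unit_state3 d psi" and A: "observable d A" and B: "observable d B" and C: "observable d C"
  shows "cmod (expect3 d psi A B C) \<le> 1"
proof -
  define p3 where "p3 = (\<lambda>a b c. \<Sum>c'<d. C c c' * psi a b c')"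
  define p2 where "p2 = (\<lambda>a b c. \<Sum>b'<d. B b b' * p3 a b' c)"
  define p1 where "p1 = (\<lambda>a b c. \<Sum>a'<d. A a a' * p2 a' b c)"
  have n3: "(\<Sum>a<d. \<Sum>b<d. \<Sum>c<d. (cmod (p3 a b c))^2) = 1"
    using U unfolding unit_state3_def p3_def
    by (simp add: unitary1[OF C])
  have n2: "(\<Sum>a<d. \<Sum>b<d. \<Sum>c<d. (cmod (p2 a b c))^2) = 1"
  proof -
    have "(\<Sum>a<d. \<Sum>b<d. \<Sum>c<d. (cmod (p2 a b c))^2) = (\<Sum>a<d. \<Sum>c<d. \<Sum>b<d. (cmod (p2 a b c))^2)"
      by (rule sum.cong[OF refl], rule sum.swap)
    also have "\<dots> = (\<Sum>a<d. \<Sum>c<d. \<Sum>b<d. (cmod (p3 a b c))^2)"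
      unfolding p2_def by (simp add: unitary1[OF B])
    also have "\<dots> = (\<Sum>a<d. \<Sum>b<d. \<Sum>c<d. (cmod (p3 a b c))^2)"
      by (rule sum.cong[OF refl], rule sum.swap)
    also have "\<dots> = 1" by (rule n3)
    finally show ?thesis .
  qed
  have n1: "(\<Sum>a<d. \<Sum>b<d. \<Sum>c<d. (cmod (p1 a b c))^2) = 1"
  proof -
    have "(\<Sum>a<d. \<Sum>b<d. \<Sum>c<d. (cmod (p1 a b c))^2) = (\<Sum>b<d. \<Sum>c<d. \<Sum>a<d. (cmod (p1 a b c))^2)"
      by (subst pull2) (rule refl)
    also have "\<dots> = (\<Sum>b<d. \<Sum>c<d. \<Sum>a<d. (cmod (p2 a b c))^2)"
      unfolding p1_def by (simp add: unitary1[OF A])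
    also have "\<dots> = 1" using n2 by (subst pull2[symmetric])
    finally show ?thesis .
  qed
  have e: "expect3 d psi A B C = (\<Sum>a<d. \<Sum>b<d. \<Sum>c<d. cnj (psi a b c) * p1 a b c)"
    unfolding expect3_def p1_def p2_def p3_def
    by (simp add: sum_distrib_left mult_ac)
  have "cmod (expect3 d psi A B C) \<le> (\<Sum>a<d. \<Sum>b<d. \<Sum>c<d. ((cmod (psi a b c))^2 + (cmod (p1 a b c))^2) / 2)"
    unfolding e
  proof (intro sum_norm_le)
    fix a b c
    have "cmod (psi a b c) * cmod (p1 a b c) \<le> ((cmod (psi a b c))^2 + (cmod (p1 a b c))^2) / 2"
      using sum_squares_bound[of "cmod (psi a b c)" "cmod (p1 a b c)"] by (simp add: power2_eq_square)
    thus "cmod (cnj (psi a b c) * p1 a b c) \<le> ((cmod (psi a b c))^2 + (cmod (p1 a b c))^2) / 2"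
      by (simp add: norm_mult)
  qed
  also have "\<dots> = 1" using n1 U unfolding unit_state3_def
    by (simp add: sum.distrib sum_divide_distrib[symmetric])
  finally show ?thesis .
qed



definition Tm :: "('n::finite) tensor6 \<Rightarrow> 'n \<times> 'n \<times> 'n \<Rightarrow> 'n \<times> 'n \<times> 'n \<Rightarrow> complex" where
  "Tm T s t = T (fst s) (fst t) (fst (snd s)) (fst (snd t)) (snd (snd s)) (snd (snd t))"

definition nrm2 :: "(('n::finite) \<times> 'n \<times> 'n \<Rightarrow> complex) \<Rightarrow> real" where
  "nrm2 x = (\<Sum>t\<in>UNIV. (cmod (x t))^2)"

definition ip :: "(('n::finite) \<times> 'n \<times> 'n \<Rightarrow> complex) \<Rightarrow> ('n \<times> 'n \<times> 'n \<Rightarrow> complex) \<Rightarrow> complex" where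
  "ip x y = (\<Sum>t\<in>UNIV. cnj (x t) * y t)"

definition Ap :: "('n::finite) tensor6 \<Rightarrow> ('n \<times> 'n \<times> 'n \<Rightarrow> complex) \<Rightarrow> ('n \<times> 'n \<times> 'n \<Rightarrow> complex)" where
  "Ap T x = (\<lambda>s. \<Sum>t\<in>UNIV. Tm T s t * x t)"

lemma sum3: "(\<Sum>i\<in>UNIV. \<Sum>j\<in>UNIV. \<Sum>k\<in>UNIV. g i j k) = (\<Sum>t\<in>(UNIV::('a::finite \<times> 'b::finite \<times> 'c::finite) set). (g (fst t) (fst (snd t)) (snd (snd t)) :: 'd::comm_monoid_add))"
proof -
  have "(\<Sum>i\<in>UNIV. \<Sum>j\<in>UNIV. \<Sum>k\<in>UNIV. g i j k) = (\<Sum>i\<in>(UNIV::'a set). \<Sum>p\<in>(UNIV::('b \<times> 'c) set). g i (fst p) (snd p))"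
    by (simp add: sum.cartesian_product split_def)
  also have "\<dots> = (\<Sum>t\<in>(UNIV::('a \<times> 'b \<times> 'c) set). g (fst t) (fst (snd t)) (snd (snd t)))"
    unfolding sum.cartesian_product by (simp add: case_prod_beta)
  finally show ?thesis .
qed

lemma ip_self: "ip x x = complex_of_real (nrm2 x)"
  unfolding ip_def nrm2_def of_real_sum complex_norm_square by (simp add: mult.commute)

lemma ip_add_left: "ip (\<lambda>t. x t + y t) z = ip x z + ip y z"
  unfolding ip_def by (simp add: algebra_simps sum.distrib)
lemma ip_add_right: "ip z (\<lambda>t. x t + y t) = ip z x + ip z y"
  unfolding ip_def by (simp add: algebra_simps sum.distrib)
lemma ip_diff_left: "ip (\<lambda>t. x t - y t) z = ip x z - ip y z"
  unfolding ip_def by (simp add: algebra_simps sum_subtractf)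
lemma ip_diff_right: "ip z (\<lambda>t. x t - y t) = ip z x - ip z y"
  unfolding ip_def by (simp add: algebra_simps sum_subtractf)
lemma ip_scale_left: "ip (\<lambda>t. c * x t) z = cnj c * ip x z"
  unfolding ip_def by (simp add: algebra_simps sum_distrib_left)
lemma ip_scale_right: "ip z (\<lambda>t. c * x t) = c * ip z x"
  unfolding ip_def by (simp add: algebra_simps sum_distrib_left)
lemma Ap_add: "Ap T (\<lambda>t. x t + y t) = (\<lambda>s. Ap T x s + Ap T y s)"
  unfolding Ap_def by (simp add: algebra_simps sum.distrib)
lemma Ap_diff: "Ap T (\<lambda>t. x t - y t) = (\<lambda>s. Ap T x s - Ap T y s)"
  unfolding Ap_def by (simp add: algebra_simps sum_subtractf)

lemma Tm_herm: "tensor_hermitian T \<Longrightarrow> Tm T s t = cnj (Tm T t s)"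
  unfolding tensor_hermitian_def Tm_def by blast

lemma ip_herm:
  assumes "tensor_hermitian T"
  shows "ip x (Ap T y) = cnj (ip y (Ap T x))"
proof -
  have cnjT: "\<And>s t. cnj (Tm T s t) = Tm T t s" using Tm_herm[OF assms] by (metis complex_cnj_cnj)
  have "cnj (ip y (Ap T x)) = (\<Sum>s\<in>UNIV. \<Sum>t\<in>UNIV. y s * Tm T t s * cnj (x t))"
    unfolding ip_def Ap_def 
    by (simp add: cnj_sum sum_distrib_left mult_ac cnjT)
  also have "\<dots> = (\<Sum>t\<in>UNIV. \<Sum>s\<in>UNIV. y s * Tm T t s * cnj (x t))" by (rule sum.swap)
  also have "\<dots> = ip x (Ap T y)"
    unfolding ip_def Ap_def sum_distrib_left by (intro sum.cong refl) (simp add: mult.commute mult.left_commute)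
  finally show ?thesis by (rule sym)
qed

lemma polar_id:
  "ip (\<lambda>t. x t + y t) (Ap T (\<lambda>t. x t + y t)) - ip (\<lambda>t. x t - y t) (Ap T (\<lambda>t. x t - y t))
     = 2 * (ip x (Ap T y) + ip y (Ap T x))"
  unfolding Ap_add Ap_diff ip_add_left ip_add_right ip_diff_left ip_diff_right
  by (simp add: algebra_simps)

lemma parallelogram:
  "nrm2 (\<lambda>t. x t + y t) + nrm2 (\<lambda>t. x t - y t) = 2 * nrm2 x + 2 * nrm2 y"
proof -
  have "complex_of_real (nrm2 (\<lambda>t. x t + y t) + nrm2 (\<lambda>t. x t - y t)) = complex_of_real (2 * nrm2 x + 2 * nrm2 y)"
    unfolding of_real_add of_real_mult ip_self[symmetric]
    unfolding ip_add_left ip_add_right ip_diff_left ip_diff_right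
    by (simp add: algebra_simps)
  thus ?thesis using of_real_eq_iff by blast
qed

lemma nrm2_nonneg: "nrm2 x \<ge> 0" unfolding nrm2_def by (simp add: sum_nonneg)

lemma polarization:
  assumes herm: "tensor_hermitian T" and K: "K \<ge> 0"
    and H: "\<And>z. cmod (ip z (Ap T z)) \<le> K * nrm2 z"
    and x: "nrm2 x \<le> 1"
  shows "sqrt (nrm2 (Ap T x)) \<le> K"
proof (cases "nrm2 (Ap T x) = 0")
  case True thus ?thesis using K by simp
next
  case False
  define v where "v = Ap T x"
  define m where "m = sqrt (nrm2 v)"
  have mpos: "m > 0" using False nrm2_nonneg[of v] unfolding m_def v_def by simp
  have m2: "m^2 = nrm2 v" unfolding m_def using nrm2_nonneg[of v] by simp
  define y where "y = (\<lambda>t. complex_of_real (1/m) * v t)"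
  have ny: "nrm2 y = 1"
  proof -
    have "complex_of_real (nrm2 y) = ip y y" by (rule ip_self[symmetric])
    also have "\<dots> = cnj (complex_of_real (1/m)) * (complex_of_real (1/m) * ip v v)"
      unfolding y_def ip_scale_left ip_scale_right ..
    also have "\<dots> = complex_of_real (1/m) * complex_of_real (1/m) * complex_of_real (m^2)"
      unfolding ip_self m2 by simp
    also have "\<dots> = 1" using mpos by (simp add: power2_eq_square)
    finally show ?thesis by simp
  qed
  have iy: "ip y (Ap T x) = complex_of_real m"
  proof -
    have "ip y (Ap T x) = complex_of_real (1/m) * complex_of_real (m^2)"
      unfolding y_def ip_scale_left v_def[symmetric] ip_self m2 by simp
    also have "\<dots> = complex_of_real m" using mpos by (simp add: power2_eq_square)
    finally show ?thesis .
  qed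
  have ix: "ip x (Ap T y) = complex_of_real m" using ip_herm[OF herm, of x y] iy by simp
  have "complex_of_real (4 * m) = ip (\<lambda>t. x t + y t) (Ap T (\<lambda>t. x t + y t)) - ip (\<lambda>t. x t - y t) (Ap T (\<lambda>t. x t - y t))"
    unfolding polar_id ix iy by simp
  hence "Re (complex_of_real (4 * m)) = Re (ip (\<lambda>t. x t + y t) (Ap T (\<lambda>t. x t + y t)) - ip (\<lambda>t. x t - y t) (Ap T (\<lambda>t. x t - y t)))"
    by (rule arg_cong)
  hence "4 * m = Re (ip (\<lambda>t. x t + y t) (Ap T (\<lambda>t. x t + y t)) - ip (\<lambda>t. x t - y t) (Ap T (\<lambda>t. x t - y t)))"
    by (simp only: Re_complex_of_real)
  also have "\<dots> \<le> cmod (ip (\<lambda>t. x t + y t) (Ap T (\<lambda>t. x t + y t))) + cmod (ip (\<lambda>t. x t - y t) (Ap T (\<lambda>t. x t - y t)))"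
    using complex_Re_le_cmod[of "ip (\<lambda>t. x t + y t) (Ap T (\<lambda>t. x t + y t))"]
      abs_Re_le_cmod[of "ip (\<lambda>t. x t - y t) (Ap T (\<lambda>t. x t - y t))"] by simp
  also have "\<dots> \<le> K * nrm2 (\<lambda>t. x t + y t) + K * nrm2 (\<lambda>t. x t - y t)"
    by (intro add_mono H)
  also have "\<dots> = K * (2 * nrm2 x + 2 * nrm2 y)" by (simp only: distrib_left[symmetric] parallelogram)
  also have "\<dots> \<le> K * 4" using x ny K by (intro mult_left_mono) auto
  finally have "4 * m \<le> K * 4" .
  hence "m \<le> K" by simp
  thus ?thesis unfolding m_def v_def .
qed



lemma pull6_3:
  "(\<Sum>P\<in>A. \<Sum>Q\<in>B. \<Sum>R\<in>C. \<Sum>i\<in>I1. \<Sum>i'\<in>I2. \<Sum>j\<in>I3. \<Sum>j'\<in>I4. \<Sum>k\<in>I5. \<Sum>k'\<in>I6. f P Q R i i' j j' k k')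
 = (\<Sum>i\<in>I1. \<Sum>i'\<in>I2. \<Sum>j\<in>I3. \<Sum>j'\<in>I4. \<Sum>k\<in>I5. \<Sum>k'\<in>I6. \<Sum>P\<in>A. \<Sum>Q\<in>B. \<Sum>R\<in>C. (f P Q R i i' j j' k k' :: 'c::comm_monoid_add))"
proof -
  have "(\<Sum>P\<in>A. \<Sum>Q\<in>B. \<Sum>R\<in>C. \<Sum>i\<in>I1. \<Sum>i'\<in>I2. \<Sum>j\<in>I3. \<Sum>j'\<in>I4. \<Sum>k\<in>I5. \<Sum>k'\<in>I6. f P Q R i i' j j' k k')
    = (\<Sum>P\<in>A. \<Sum>Q\<in>B. \<Sum>i\<in>I1. \<Sum>i'\<in>I2. \<Sum>j\<in>I3. \<Sum>j'\<in>I4. \<Sum>k\<in>I5. \<Sum>k'\<in>I6. \<Sum>R\<in>C. f P Q R i i' j j' k k')"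
    by (rule sum.cong[OF refl], rule sum.cong[OF refl], rule pull6)
  also have "\<dots> = (\<Sum>P\<in>A. \<Sum>i\<in>I1. \<Sum>i'\<in>I2. \<Sum>j\<in>I3. \<Sum>j'\<in>I4. \<Sum>k\<in>I5. \<Sum>k'\<in>I6. \<Sum>Q\<in>B. \<Sum>R\<in>C. f P Q R i i' j j' k k')"
    by (rule sum.cong[OF refl], rule pull6)
  also have "\<dots> = (\<Sum>i\<in>I1. \<Sum>i'\<in>I2. \<Sum>j\<in>I3. \<Sum>j'\<in>I4. \<Sum>k\<in>I5. \<Sum>k'\<in>I6. \<Sum>P\<in>A. \<Sum>Q\<in>B. \<Sum>R\<in>C. f P Q R i i' j j' k k')"
    by (rule pull6)
  finally show ?thesis .
qed

lemma sum3': "(\<Sum>t\<in>(UNIV::('a::finite \<times> 'b::finite \<times> 'c::finite) set). (X t :: 'd::comm_monoid_add)) = (\<Sum>i\<in>UNIV. \<Sum>j\<in>UNIV. \<Sum>k\<in>UNIV. X (i, j, k))"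
  using sum3[of "\<lambda>i j k. X (i, j, k)"] by simp

lemma enum_bij: "\<exists>f :: nat \<Rightarrow> 'n::finite. bij_betw f {..<CARD('n)} UNIV"
  by (rule finite_same_card_bij) auto

lemma ent_bdd:
  fixes T :: "('n::finite) tensor6" and S :: "'n mat set"
  shows "bdd_above {cmod (\<Sum>x\<in>S. \<Sum>y\<in>S. \<Sum>z\<in>S.
          complex_of_real (game_pi T S x y z * game_sign T x y z) * expect3 d psi (A x) (B y) (C z))
      | d psi A B C. unit_state3 d psi \<and> (\<forall>x\<in>S. observable d (A x))
          \<and> (\<forall>y\<in>S. observable d (B y)) \<and> (\<forall>z\<in>S. observable d (C z))}"
proof (rule bdd_aboveI[where M="\<Sum>x\<in>S. \<Sum>y\<in>S. \<Sum>z\<in>S. \<bar>game_pi T S x y z * game_sign T x y z\<bar>"])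
  fix e assume "e \<in> {cmod (\<Sum>x\<in>S. \<Sum>y\<in>S. \<Sum>z\<in>S.
          complex_of_real (game_pi T S x y z * game_sign T x y z) * expect3 d psi (A x) (B y) (C z))
      | d psi A B C. unit_state3 d psi \<and> (\<forall>x\<in>S. observable d (A x))
          \<and> (\<forall>y\<in>S. observable d (B y)) \<and> (\<forall>z\<in>S. observable d (C z))}"
  then obtain d psi A B C where e: "e = cmod (\<Sum>x\<in>S. \<Sum>y\<in>S. \<Sum>z\<in>S.
          complex_of_real (game_pi T S x y z * game_sign T x y z) * expect3 d psi (A x) (B y) (C z))"
    and h: "unit_state3 d psi" "\<forall>x\<in>S. observable d (A x)" "\<forall>y\<in>S. observable d (B y)" "\<forall>z\<in>S. observable d (C z)"
    by blast
  show "e \<le> (\<Sum>x\<in>S. \<Sum>y\<in>S. \<Sum>z\<in>S. \<bar>game_pi T S x y z * game_sign T x y z\<bar>)"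
    unfolding e
  proof (intro sum_norm_le)
    fix x y z assume xyz: "x \<in> S" "y \<in> S" "z \<in> S"
    have "cmod (expect3 d psi (A x) (B y) (C z)) \<le> 1"
      using h xyz by (intro expect3_le) auto
    hence "\<bar>game_pi T S x y z * game_sign T x y z\<bar> * cmod (expect3 d psi (A x) (B y) (C z))
        \<le> \<bar>game_pi T S x y z * game_sign T x y z\<bar> * 1"
      by (intro mult_left_mono) auto
    thus "cmod (complex_of_real (game_pi T S x y z * game_sign T x y z) * expect3 d psi (A x) (B y) (C z))
        \<le> \<bar>game_pi T S x y z * game_sign T x y z\<bar>"
      by (simp only: norm_mult norm_of_real mult_1_right)
  qed
qed

lemma ent_elem:
  fixes T :: "('n::finite) tensor6" and S :: "'n mat set" and psi :: "'n \<times> 'n \<times> 'n \<Rightarrow> complex"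
  assumes B: "pauli_like_basis S" and herm: "tensor_hermitian T" and Zp: "normZ T S > 0"
    and u: "nrm2 psi = 1"
  shows "real CARD('n)^3 * cmod (ip psi (Ap T psi)) / normZ T S \<le> entangled_bias S S S (game_pi T S) (game_sign T)"
proof -
  let ?n = "CARD('n)"
  let ?Z = "normZ T S"
  obtain f :: "nat \<Rightarrow> 'n" where bf: "bij_betw f {..<?n} UNIV" using enum_bij by blast
  define g where "g = inv_into {..<?n} f"
  have bg: "bij_betw g UNIV {..<?n}" unfolding g_def by (rule bij_betw_inv_into[OF bf])
  have fg: "f (g i) = i" for i unfolding g_def using bf by (simp add: bij_betw_inv_into_right)
  have injf: "inj_on f {..<?n}" using bf by (simp add: bij_betw_def)
  have RI: "(\<Sum>a<?n. h a) = (\<Sum>i\<in>UNIV. h (g i))" for h :: "nat \<Rightarrow> complex"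
    using sum.reindex_bij_betw[OF bg, of h] by simp
  have RIr: "(\<Sum>a<?n. h a) = (\<Sum>i\<in>UNIV. h (g i))" for h :: "nat \<Rightarrow> real"
    using sum.reindex_bij_betw[OF bg, of h] by simp
  define psi' where "psi' = (\<lambda>a b c. psi (f a, f b, f c))"
  define Aop where "Aop = (\<lambda>(P::'n mat) a b. P (f a) (f b))"
  have SH: "\<And>P. P \<in> S \<Longrightarrow> mat_hermitian P \<and> mat_mult P P = mat_id"
    using B unfolding pauli_like_basis_def by auto
  have obs: "observable ?n (Aop P)" if P: "P \<in> S" for P
  proof -
    have h1: "\<forall>a<?n. \<forall>b<?n. Aop P a b = cnj (Aop P b a)"
      using SH[OF P] unfolding Aop_def mat_hermitian_def by blast
    have h2: "(\<Sum>e<?n. Aop P a e * Aop P e b) = (if a = b then 1 else 0)" if ab: "a < ?n" "b < ?n" for a b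
    proof -
      have "(\<Sum>e<?n. Aop P a e * Aop P e b) = (\<Sum>k\<in>UNIV. P (f a) k * P k (f b))"
        unfolding RI Aop_def by (simp add: fg)
      also have "\<dots> = mat_mult P P (f a) (f b)" unfolding mat_mult_def by (rule refl)
      also have "\<dots> = mat_id (f a) (f b)" using SH[OF P] by simp
      also have "\<dots> = (if a = b then 1 else 0)" unfolding mat_id_def using injf ab
        by (auto simp: inj_on_def)
      finally show ?thesis .
    qed
    show ?thesis unfolding observable_def using h1 h2 by blast
  qed
  have us: "unit_state3 ?n psi'"
  proof -
    have "(\<Sum>a<?n. \<Sum>b<?n. \<Sum>c<?n. (cmod (psi' a b c))^2) = (\<Sum>i\<in>UNIV. \<Sum>j\<in>UNIV. \<Sum>k\<in>UNIV. (cmod (psi (i, j, k)))^2)"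
      unfolding RIr psi'_def by (simp add: fg)
    also have "\<dots> = nrm2 psi" unfolding nrm2_def sum3 by simp
    finally show ?thesis unfolding unit_state3_def using u by simp
  qed
  have ex: "expect3 ?n psi' (Aop P) (Aop Q) (Aop R) = (\<Sum>i\<in>UNIV. \<Sum>j\<in>UNIV. \<Sum>k\<in>UNIV. \<Sum>i'\<in>UNIV. \<Sum>j'\<in>UNIV. \<Sum>k'\<in>UNIV.
      (P i i' * Q j j' * R k k') * (cnj (psi (i, j, k)) * psi (i', j', k')))" for P Q R
    unfolding expect3_def RI psi'_def Aop_def by (simp add: fg mult_ac)
  have gr: "complex_of_real (game_pi T S P Q R * game_sign T P Q R) = gC T P Q R / complex_of_real ?Z"
    if "P \<in> S" "Q \<in> S" "R \<in> S" for P Q R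
  proof -
    have "cnj (gC T P Q R) = gC T P Q R" using SH that herm by (intro gC_real) auto
    hence "complex_of_real (Re (gC T P Q R)) = gC T P Q R" by (simp add: complex_eq_iff)
    thus ?thesis unfolding pisign coeffG_gC by simp
  qed
  have "(\<Sum>P\<in>S. \<Sum>Q\<in>S. \<Sum>R\<in>S. complex_of_real (game_pi T S P Q R * game_sign T P Q R) * expect3 ?n psi' (Aop P) (Aop Q) (Aop R))
     = (\<Sum>P\<in>S. \<Sum>Q\<in>S. \<Sum>R\<in>S. \<Sum>i\<in>UNIV. \<Sum>j\<in>UNIV. \<Sum>k\<in>UNIV. \<Sum>i'\<in>UNIV. \<Sum>j'\<in>UNIV. \<Sum>k'\<in>UNIV.
      (gC T P Q R * (P i i' * Q j j' * R k k')) * (cnj (psi (i, j, k)) * psi (i', j', k') * inverse (complex_of_real ?Z)))"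
    apply (rule sum.cong[OF refl], rule sum.cong[OF refl], rule sum.cong[OF refl])
    apply (subst gr, assumption+)
    apply (simp only: ex sum_distrib_left)
    apply (intro sum.cong refl)
    apply (simp add: divide_inverse mult_ac)
    done
  also have "\<dots> = (\<Sum>i\<in>UNIV. \<Sum>j\<in>UNIV. \<Sum>k\<in>UNIV. \<Sum>i'\<in>UNIV. \<Sum>j'\<in>UNIV. \<Sum>k'\<in>UNIV.
      (\<Sum>P\<in>S. \<Sum>Q\<in>S. \<Sum>R\<in>S. gC T P Q R * (P i i' * Q j j' * R k k')) * (cnj (psi (i, j, k)) * psi (i', j', k') * inverse (complex_of_real ?Z)))"
    by (subst pull6_3) (simp add: sum_distrib_right)
  also have "\<dots> = (\<Sum>i\<in>UNIV. \<Sum>j\<in>UNIV. \<Sum>k\<in>UNIV. \<Sum>i'\<in>UNIV. \<Sum>j'\<in>UNIV. \<Sum>k'\<in>UNIV.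
      complex_of_real (real ?n ^ 3 / ?Z) * (cnj (psi (i, j, k)) * (T i i' j j' k k' * psi (i', j', k'))))"
    unfolding expansion[OF B] by (simp add: divide_inverse mult_ac)
  also have "\<dots> = complex_of_real (real ?n ^ 3 / ?Z) * ip psi (Ap T psi)"
    unfolding ip_def Ap_def Tm_def sum_distrib_left sum3' by (simp add: mult_ac)
  finally have sumeq: "(\<Sum>P\<in>S. \<Sum>Q\<in>S. \<Sum>R\<in>S. complex_of_real (game_pi T S P Q R * game_sign T P Q R) * expect3 ?n psi' (Aop P) (Aop Q) (Aop R))
     = complex_of_real (real ?n ^ 3 / ?Z) * ip psi (Ap T psi)" .
  have "real ?n ^ 3 * cmod (ip psi (Ap T psi)) / ?Z = cmod (complex_of_real (real ?n ^ 3 / ?Z) * ip psi (Ap T psi))"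
    using Zp by (simp only: norm_mult norm_of_real) simp
  also have "\<dots> \<le> entangled_bias S S S (game_pi T S) (game_sign T)"
    unfolding entangled_bias_def
    by (rule cSup_upper[OF _ ent_bdd], unfold sumeq[symmetric], use us obs in blast)
  finally show ?thesis .
qed


lemma Ap_scale: "Ap T (\<lambda>t. c * x t) = (\<lambda>s. c * Ap T x s)"
  unfolding Ap_def by (simp add: sum_distrib_left mult_ac)

lemma nrm2_zero: "nrm2 z = 0 \<Longrightarrow> z t = 0"
proof -
  assume "nrm2 z = 0"
  hence "\<forall>t\<in>UNIV. (cmod (z t))^2 = 0" unfolding nrm2_def
    by (subst sum_nonneg_eq_0_iff[symmetric]) auto
  thus "z t = 0" by (cases t) auto
qed

lemma ent_part:
  fixes T :: "('n::finite) tensor6" and S :: "'n mat set"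
  assumes B: "pauli_like_basis S" and herm: "tensor_hermitian T" and Zp: "normZ T S > 0"
  shows "real CARD('n) ^ 3 * norm_2eps T / normZ T S \<le> entangled_bias S S S (game_pi T S) (game_sign T)
     \<and> entangled_bias S S S (game_pi T S) (game_sign T) \<ge> 0 \<and> norm_2eps T \<ge> 0"
proof -
  let ?N = "real CARD('n)"
  let ?Z = "normZ T S"
  let ?E = "entangled_bias S S S (game_pi T S) (game_sign T)"
  have Npos: "?N > 0" by simp
  define d0 :: "'n \<times> 'n \<times> 'n \<Rightarrow> complex" where "d0 = (\<lambda>t. if t = undefined then 1 else 0)"
  have "nrm2 d0 = (\<Sum>t\<in>UNIV. if t = (undefined::'n \<times> 'n \<times> 'n) then 1 else 0)" unfolding nrm2_def d0_def
    by (intro sum.cong) auto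
  hence "nrm2 d0 = 1" by simp
  from ent_elem[OF B herm Zp this] have E0: "?E \<ge> 0"
    by (rule order_trans[rotated]) (use Zp in simp)
  define K where "K = ?Z * ?E / ?N ^ 3"
  have K0: "K \<ge> 0" unfolding K_def using Zp E0 by simp
  have H: "cmod (ip z (Ap T z)) \<le> K * nrm2 z" for z
  proof (cases "nrm2 z = 0")
    case True
    have "ip z (Ap T z) = 0" unfolding ip_def using nrm2_zero[OF True] by simp
    thus ?thesis using True by simp
  next
    case False
    have nz: "nrm2 z > 0" using False nrm2_nonneg[of z] by simp
    define r where "r = sqrt (nrm2 z)"
    have rpos: "r > 0" unfolding r_def using nz by simp
    have r2: "r^2 = nrm2 z" unfolding r_def using nz by simp
    define w where "w = (\<lambda>t. complex_of_real (1/r) * z t)"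
    have nw: "nrm2 w = 1"
    proof -
      have "complex_of_real (nrm2 w) = ip w w" by (rule ip_self[symmetric])
      also have "\<dots> = cnj (complex_of_real (1/r)) * (complex_of_real (1/r) * ip z z)"
        unfolding w_def ip_scale_left ip_scale_right ..
      also have "\<dots> = complex_of_real (1/r) * complex_of_real (1/r) * complex_of_real (r^2)"
        unfolding ip_self r2 by simp
      also have "\<dots> = 1" using rpos by (simp add: power2_eq_square)
      finally show ?thesis by simp
    qed
    have iw: "ip w (Ap T w) = complex_of_real (1/r^2) * ip z (Ap T z)"
      unfolding w_def Ap_scale ip_scale_left ip_scale_right by (simp add: power2_eq_square)
    have "?N^3 * cmod (ip w (Ap T w)) / ?Z \<le> ?E" by (rule ent_elem[OF B herm Zp nw])
    hence "?N^3 * (cmod (ip z (Ap T z)) / r^2) / ?Z \<le> ?E"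
      unfolding iw norm_mult norm_of_real using rpos by simp
    hence "cmod (ip z (Ap T z)) \<le> ?Z * ?E / ?N^3 * r^2" using rpos Zp Npos
      by (simp add: field_simps)
    thus ?thesis unfolding K_def r2 .
  qed
  have elem: "sqrt (\<Sum>i\<in>UNIV. \<Sum>j\<in>UNIV. \<Sum>k\<in>UNIV.
        (cmod (\<Sum>i'\<in>UNIV. \<Sum>j'\<in>UNIV. \<Sum>k'\<in>UNIV. T i i' j j' k k' * u i' j' k'))^2) \<le> K"
    if u: "(\<Sum>i\<in>UNIV. \<Sum>j\<in>UNIV. \<Sum>k\<in>UNIV. (cmod (u i j k))^2) \<le> 1" for u
  proof -
    define x where "x = (\<lambda>t. u (fst t) (fst (snd t)) (snd (snd t)))"
    have nx: "nrm2 x \<le> 1" using u unfolding nrm2_def sum3' x_def by simp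
    have "(\<Sum>i\<in>UNIV. \<Sum>j\<in>UNIV. \<Sum>k\<in>UNIV.
        (cmod (\<Sum>i'\<in>UNIV. \<Sum>j'\<in>UNIV. \<Sum>k'\<in>UNIV. T i i' j j' k k' * u i' j' k'))^2) = nrm2 (Ap T x)"
      unfolding nrm2_def Ap_def Tm_def sum3' x_def by simp
    thus ?thesis using polarization[OF herm K0 H nx] by simp
  qed
  let ?SET = "{sqrt (\<Sum>i\<in>UNIV. \<Sum>j\<in>UNIV. \<Sum>k\<in>UNIV.
        (cmod (\<Sum>i'\<in>UNIV. \<Sum>j'\<in>UNIV. \<Sum>k'\<in>UNIV. T i i' j j' k k' * u i' j' k'))^2)
      | u :: 'n \<Rightarrow> 'n \<Rightarrow> 'n \<Rightarrow> complex.
        (\<Sum>i\<in>UNIV. \<Sum>j\<in>UNIV. \<Sum>k\<in>UNIV. (cmod (u i j k))^2) \<le> 1}"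
  have zin: "0 \<in> ?SET"
    by (rule CollectI, rule exI[where x="\<lambda>_ _ _. 0"]) simp
  have N2K: "norm_2eps T \<le> K" unfolding norm_2eps_def
    by (rule cSup_least) (use zin elem in auto)
  have bdd: "bdd_above ?SET" by (rule bdd_aboveI[where M=K]) (use elem in auto)
  have N20: "norm_2eps T \<ge> 0" unfolding norm_2eps_def by (rule cSup_upper[OF zin bdd])
  have "?N ^ 3 * norm_2eps T / ?Z \<le> ?N ^ 3 * K / ?Z" using N2K Zp Npos
    by (intro divide_right_mono mult_left_mono) auto
  also have "\<dots> = ?E" unfolding K_def using Zp Npos by simp
  finally show ?thesis using E0 N20 by simp
qed


lemma norm3_nonneg: "norm_3eps T \<ge> 0"
proof -
  have "cmod (F6 T (\<lambda>_ _. 0) (\<lambda>_ _. 0) (\<lambda>_ _. 0)) \<le> norm_3eps T"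
    unfolding norm3_alt
    by (rule cSup_upper[OF _ bdd3], rule CollectI, intro exI[where x="\<lambda>_ _. 0"]) (simp add: hs_norm2_def)
  thus ?thesis by (simp add: F6_def)
qed

theorem mainTheorem9:
  fixes T :: "('n::finite) tensor6" and S :: "'n mat set"
  assumes "T \<noteq> (\<lambda>_ _ _ _ _ _. 0)"
    and "tensor_hermitian T"
    and "pauli_like_basis S"
    and "normZ T S > 0"
  shows "classical_bias S S S (game_pi T S) (game_sign T) \<le> real CARD('n) powr (9/2) * norm_3eps T / normZ T S
       \<and> entangled_bias S S S (game_pi T S) (game_sign T) \<ge> real CARD('n) ^ 3 * norm_2eps T / normZ T S
       \<and> entangled_bias S S S (game_pi T S) (game_sign T)
           \<ge> real CARD('n) powr (-3/2) * (norm_2eps T / norm_3eps T) * classical_bias S S S (game_pi T S) (game_sign T)"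
proof -
  let ?N = "real CARD('n)"
  let ?Z = "normZ T S"
  let ?E = "entangled_bias S S S (game_pi T S) (game_sign T)"
  let ?C = "classical_bias S S S (game_pi T S) (game_sign T)"
  have c1: "?C \<le> ?N powr (9/2) * norm_3eps T / ?Z" by (rule classical_part[OF assms(3,4)])
  have c2: "?N ^ 3 * norm_2eps T / ?Z \<le> ?E" "?E \<ge> 0" "norm_2eps T \<ge> 0"
    using ent_part[OF assms(3,2,4)] by auto
  have Npos: "?N > 0" by simp
  have c3: "?N powr (-3/2) * (norm_2eps T / norm_3eps T) * ?C \<le> ?E"
  proof (cases "norm_3eps T = 0")
    case True thus ?thesis using c2 by simp
  next
    case False
    hence N3: "norm_3eps T > 0" using norm3_nonneg[of T] by simp
    have cc: "?N powr (-3/2) * (norm_2eps T / norm_3eps T) \<ge> 0" using N3 c2 by simp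
    have "?N powr (-3/2) * (norm_2eps T / norm_3eps T) * ?C
        \<le> ?N powr (-3/2) * (norm_2eps T / norm_3eps T) * (?N powr (9/2) * norm_3eps T / ?Z)"
      using c1 cc by (rule mult_left_mono)
    also have "\<dots> = (?N powr (-3/2) * ?N powr (9/2)) * norm_2eps T / ?Z" using N3 by simp
    also have "?N powr (-3/2) * ?N powr (9/2) = ?N ^ 3"
      using Npos by (simp add: powr_add[symmetric] powr_realpow[of _ 3, simplified])
    finally show ?thesis using c2 by simp
  qed
  show ?thesis using c1 c2 c3 by simp
qed


end
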